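(* Let $\mathcal W$ be an operator space, $X\in\mathcal W^{n\times n}$, $X'\in\mathcal W^{n'\times n'}$, and let $M,M'\in\mathbb N$ be such that $Mn=M'n'$ is the least common multiple of $n$ and $n'$. Then $\bigl\|\bigoplus_{\alpha=1}^MX-\bigoplus_{\beta=1}^{M'}X'\bigr\|_{Mn}=0$ if and only if there exists $Y\in\mathcal W^{d\times d}$ for some $d$, and $m,m'\in\mathbb N$, such that $X=\bigoplus_{\alpha=1}^mY$ and $X'=\bigoplus_{\beta=1}^{m'}Y$.
   Context: An operator space is a complex Banach space $\mathcal W$ with norms $\|\cdot\|_n$ on $\mathcal W^{n\times n}$ such that $\|X\oplus Y\|_{n+m}=\max\{\|X\|_n,\|Y\|_m\}$ and $\|TXS\|_n\le\|T\|\|X\|_n\|S\|$ for $T,S\in\mathbb C^{n\times n}$, where $X\oplus Y=\begin{bmatrix}X&0\\0&Y\end{bmatrix}$ and $\bigoplus_{\alpha=1}^mY$ denotes the block diagonal matrix with $m$ diagonal blocks equal to $Y$. *)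

theory Defs
  imports "HOL-Analysis.Analysis"
begin

text \<open>Matrices are modelled as functions nat => nat => _. The space W^{n x n}
  is the set of those matrices whose entries vanish outside the index range {0..<n}^2.\<close>

definition mats :: "nat \<Rightarrow> (nat \<Rightarrow> nat \<Rightarrow> 'w::zero) set" where
  "mats n = {X. \<forall>i j. (n \<le> i \<or> n \<le> j) \<longrightarrow> X i j = 0}"

text \<open>Complex Banach space: a real Banach space (type class banach) together with a
  complex scalar multiplication sc extending the real one and compatible with the norm.\<close>

definition complex_banach :: "(complex \<Rightarrow> 'w::banach \<Rightarrow> 'w) \<Rightarrow> bool" where
  "complex_banach sc \<longleftrightarrow>
     (\<forall>a x y. sc a (x + y) = sc a x + sc a y) \<and>
     (\<forall>a b x. sc (a + b) x = sc a x + sc b x) \<and>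
     (\<forall>a b x. sc a (sc b x) = sc (a * b) x) \<and>
     (\<forall>r x. sc (complex_of_real r) x = r *\<^sub>R x) \<and>
     (\<forall>a x. norm (sc a x) = cmod a * norm x)"

definition vnorm :: "nat \<Rightarrow> (nat \<Rightarrow> complex) \<Rightarrow> real" where
  "vnorm n v = sqrt (\<Sum>i<n. (cmod (v i))\<^sup>2)"

definition cmat_norm :: "nat \<Rightarrow> (nat \<Rightarrow> nat \<Rightarrow> complex) \<Rightarrow> real" where
  "cmat_norm n T = Sup {vnorm n (\<lambda>i. \<Sum>j<n. T i j * v j) | v. vnorm n v \<le> 1}"

definition sandwich ::
  "(complex \<Rightarrow> 'w::banach \<Rightarrow> 'w) \<Rightarrow> nat \<Rightarrow> (nat \<Rightarrow> nat \<Rightarrow> complex)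
     \<Rightarrow> (nat \<Rightarrow> nat \<Rightarrow> 'w) \<Rightarrow> (nat \<Rightarrow> nat \<Rightarrow> complex) \<Rightarrow> (nat \<Rightarrow> nat \<Rightarrow> 'w)" where
  "sandwich sc n T X S = (\<lambda>i j. if i < n \<and> j < n
      then (\<Sum>k<n. \<Sum>l<n. sc (T i k * S l j) (X k l)) else 0)"

definition dsum :: "nat \<Rightarrow> (nat \<Rightarrow> nat \<Rightarrow> 'w::zero) \<Rightarrow> nat \<Rightarrow> (nat \<Rightarrow> nat \<Rightarrow> 'w) \<Rightarrow> (nat \<Rightarrow> nat \<Rightarrow> 'w)" where
  "dsum n X m Y = (\<lambda>i j. if i < n \<and> j < n then X i j
      else if n \<le> i \<and> i < n + m \<and> n \<le> j \<and> j < n + m then Y (i - n) (j - n) else 0)"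

definition bdiag :: "nat \<Rightarrow> nat \<Rightarrow> (nat \<Rightarrow> nat \<Rightarrow> 'w::zero) \<Rightarrow> (nat \<Rightarrow> nat \<Rightarrow> 'w)" where
  "bdiag m d Y = (\<lambda>i j. if i < m * d \<and> j < m * d \<and> i div d = j div d
      then Y (i mod d) (j mod d) else 0)"

definition operator_space ::
  "(complex \<Rightarrow> 'w::banach \<Rightarrow> 'w) \<Rightarrow> (nat \<Rightarrow> (nat \<Rightarrow> nat \<Rightarrow> 'w) \<Rightarrow> real) \<Rightarrow> bool" where
  "operator_space sc N \<longleftrightarrow>
     complex_banach sc \<and>
     (\<forall>X \<in> mats 1. N 1 X = norm (X 0 0)) \<and>
     (\<forall>n. \<forall>X \<in> mats n. N n X \<ge> 0 \<and> (N n X = 0 \<longleftrightarrow> X = (\<lambda>i j. 0))) \<and>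
     (\<forall>n. \<forall>X \<in> mats n. \<forall>Y \<in> mats n. N n (\<lambda>i j. X i j + Y i j) \<le> N n X + N n Y) \<and>
     (\<forall>n a. \<forall>X \<in> mats n. N n (\<lambda>i j. sc a (X i j)) = cmod a * N n X) \<and>
     (\<forall>n m. \<forall>X \<in> mats n. \<forall>Y \<in> mats m. N (n + m) (dsum n X m Y) = max (N n X) (N m Y)) \<and>
     (\<forall>n T S. \<forall>X \<in> mats n.
        N n (sandwich sc n T X S) \<le> cmat_norm n T * N n X * cmat_norm n S)"

end

theory Submission
  imports Defs
begin

definition cinv :: "nat \<Rightarrow> (nat \<Rightarrow> nat \<Rightarrow> 'w) \<Rightarrow> nat \<Rightarrow> bool" where
  "cinv L Z s \<longleftrightarrow> (\<forall>i j. i < L \<longrightarrow> j < L \<longrightarrow> Z ((i + s) mod L) ((j + s) mod L) = Z i j)"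

lemma cinv_add: assumes "cinv L Z s" "cinv L Z t" shows "cinv L Z (s + t)"
  unfolding cinv_def
proof (intro allI impI)
  fix i j assume ij: "i < L" "j < L"
  have "Z ((i + (s + t)) mod L) ((j + (s + t)) mod L) = Z (((i + s) mod L + t) mod L) (((j + s) mod L + t) mod L)"
    by (simp only: mod_add_left_eq add.assoc)
  also have "\<dots> = Z ((i + s) mod L) ((j + s) mod L)"
  proof -
    have "(i + s) mod L < L" "(j + s) mod L < L" using ij by simp_all
    thus ?thesis using assms(2) unfolding cinv_def by blast
  qed
  also have "\<dots> = Z i j" using assms(1) ij unfolding cinv_def by blast
  finally show "Z ((i + (s + t)) mod L) ((j + (s + t)) mod L) = Z i j" .
qed

lemma cinv_0: "cinv L Z 0"
  unfolding cinv_def by simp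

lemma cinv_mult: assumes "cinv L Z s" shows "cinv L Z (k * s)"
proof (induction k)
  case 0
  then show ?case using cinv_0 by simp
next
  case (Suc k)
  have "cinv L Z (s + k * s)" using cinv_add[OF assms Suc.IH] .
  then show ?case by simp
qed

lemma cinv_modL: assumes "cinv L Z (s + b * L)" shows "cinv L Z s"
  unfolding cinv_def
proof (intro allI impI)
  fix i j assume ij: "i < L" "j < L"
  have e: "(x + (s + b * L)) mod L = (x + s) mod L" for x
    by (metis add.assoc mod_mult_self1)
  show "Z ((i + s) mod L) ((j + s) mod L) = Z i j"
    using assms ij unfolding cinv_def e by blast
qed

lemma shift_divmod: assumes "0 < (n::nat)"
  shows "((i + n) mod (M * n)) div n = (i div n + 1) mod M"
    "((i + n) mod (M * n)) mod n = i mod n"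
proof -
  have e: "(i + n) mod (M * n) = n * ((i + n) div n mod M) + (i + n) mod n"
    using mod_mult2_eq[of "i+n" n M] by (simp add: mult.commute)
  have "(i + n) div n = i div n + 1" using assms by simp
  moreover have "(i+n) mod n = i mod n" by simp
  ultimately show "((i + n) mod (M * n)) div n = (i div n + 1) mod M"
      "((i + n) mod (M * n)) mod n = i mod n" using e assms by simp_all
qed

lemma suc_mod_inj: "a < (M::nat) \<Longrightarrow> b < M \<Longrightarrow> ((a + 1) mod M = (b + 1) mod M) = (a = b)"
proof -
  have e: "\<And>x. x < M \<Longrightarrow> Suc x mod M = (if Suc x = M then 0 else Suc x)"
    by auto
  show "a < M \<Longrightarrow> b < M \<Longrightarrow> ((a + 1) mod M = (b + 1) mod M) = (a = b)"
    using e[of a] e[of b] by auto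
qed

lemma bdiag_cinv: assumes "0 < n" shows "cinv (M * n) (bdiag M n X) n"
  unfolding cinv_def
proof (intro allI impI)
  fix i j assume ij: "i < M * n" "j < M * n"
  have M: "0 < M" using ij by (cases M) auto
  have a: "i div n < M" "j div n < M" using ij assms by (simp_all add: less_mult_imp_div_less)
  have l: "(i + n) mod (M * n) < M * n" "(j + n) mod (M * n) < M * n" using M assms by simp_all
  show "bdiag M n X ((i + n) mod (M * n)) ((j + n) mod (M * n)) = bdiag M n X i j"
  proof -
    have c: "((i + n) mod (M * n) div n = (j + n) mod (M * n) div n) = (i div n = j div n)"
      using shift_divmod(1)[OF assms] suc_mod_inj[OF a] by simp
    show ?thesis
      unfolding bdiag_def using l ij c shift_divmod(2)[OF assms, of i M] shift_divmod(2)[OF assms, of j M] by simp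
  qed
qed

lemma zero_aux:
  fixes Z :: "nat \<Rightarrow> nat \<Rightarrow> 'w::zero"
  assumes n: "0 < n" "0 < n'" and L: "L = lcm n n'" and d: "d = gcd n n'"
    and hB: "\<And>a b. Z a b \<noteq> 0 \<Longrightarrow> a < L \<and> b < L \<and> a div n = b div n \<and> a div n' = b div n'"
    and inv: "cinv L Z d"
    and ab: "a < d" "d \<le> b" "b < L" and nz: "Z a b \<noteq> 0"
  shows False
proof -
  have dn: "d dvd n" "d dvd n'" "0 < d" using d n by auto
  have dle: "d \<le> n" "d \<le> n'" using dn n by (simp_all add: dvd_imp_le)
  have "a div n = 0" "a div n' = 0" using ab dle by simp_all
  hence bn: "b < n" "b < n'" using hB[OF nz] n by (auto simp: div_eq_0_iff)
  show False
  proof (cases "n' dvd n")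
    case True
    hence "d = n'" using d by (simp add: gcd_nat.absorb2)
    thus False using bn ab by simp
  next
    case False
    have "n dvd L" using L by simp
    then obtain k where k: "L = n * k" by blast
    have "k \<noteq> 0" using L n k by (metis lcm_eq_0_iff mult_0_right not_gr0)
    moreover have "k \<noteq> 1" using False k L by (metis dvd_lcm2 mult.right_neutral)
    ultimately have k2: "2 * n \<le> L" using k by (metis Suc_1 Suc_leI less_one mult.commute mult_le_mono2 nat_neq_iff)
    have "cinv L Z ((n div d - 1) * d)" by (rule cinv_mult[OF inv])
    moreover have "(n div d - 1) * d = n - d" using dn by (simp add: diff_mult_distrib)
    ultimately have c: "cinv L Z (n - d)" by simp
    have "Z ((a + (n - d)) mod L) ((b + (n - d)) mod L) = Z a b"
      using c ab unfolding cinv_def by (metis order.strict_trans order_less_le_trans)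
    moreover have "(a + (n - d)) mod L = a + (n - d)" "(b + (n - d)) mod L = b + (n - d)"
      using ab bn k2 dle by simp_all
    ultimately have "Z (a + (n - d)) (b + (n - d)) \<noteq> 0" using nz by simp
    from hB[OF this] have "(a + (n - d)) div n = (b + (n - d)) div n" by simp
    moreover have "(a + (n - d)) div n = 0" using ab dle by simp
    moreover have "(b + (n - d)) div n = 1" using ab bn dle n
      by (simp add: div_nat_eqI)
    ultimately show False by simp
  qed
qed

lemma shiftmod:
  fixes j q d L :: nat
  assumes "q * d \<le> j" "j < L" "d dvd L" "0 < d"
  shows "(j + (L div d - q) * d) mod L = j - q * d"
proof -
  have "q * d \<le> L" using assms by simp
  have "(L div d - q) * d = L - q * d" using assms by (simp add: diff_mult_distrib)
  hence "j + (L div d - q) * d = (j - q * d) + L" using assms by simp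
  moreover have "j - q * d < L" using assms by simp
  ultimately show ?thesis by simp
qed

lemma lt_case:
  fixes Z :: "nat \<Rightarrow> nat \<Rightarrow> 'w::zero"
  assumes n: "0 < n" "0 < n'" and L: "L = lcm n n'" and d: "d = gcd n n'"
    and hB: "\<And>a b. Z a b \<noteq> 0 \<Longrightarrow> a < L \<and> b < L \<and> a div n = b div n \<and> a div n' = b div n'"
    and inv: "cinv L Z d"
    and ij: "i < L" "j < L" "i div d < j div d"
  shows "Z i j = 0"
proof (rule ccontr)
  assume nz: "Z i j \<noteq> 0"
  have dp: "0 < d" "d dvd L" using d L n by auto
  define q where "q = i div d"
  have qi: "q * d \<le> i" unfolding q_def by (simp add: div_times_less_eq_dividend)
  have qj: "(q + 1) * d \<le> j" using ij(3) unfolding q_def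
    by (metis Suc_eq_plus1 Suc_leI div_times_less_eq_dividend mult_le_mono1 order_trans)
  have "Z ((i + (L div d - q) * d) mod L) ((j + (L div d - q) * d) mod L) = Z i j"
    using cinv_mult[OF inv, of "L div d - q"] ij unfolding cinv_def by blast
  moreover have "(i + (L div d - q) * d) mod L = i mod d"
    using shiftmod[OF qi ij(1) dp(2) dp(1)] unfolding q_def by (simp add: minus_div_mult_eq_mod)
  moreover have "(j + (L div d - q) * d) mod L = j - q * d"
    using shiftmod[of q d j L] qi qj ij dp by simp
  ultimately have "Z (i mod d) (j - q * d) \<noteq> 0" using nz by simp
  moreover have "d \<le> j - q * d" using qj by simp
  moreover have "j - q * d < L" using ij by simp
  ultimately show False
    using zero_aux[OF n L d hB inv, of "i mod d" "j - q * d"] dp ij by auto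
qed

lemma struct_aux:
  fixes Z :: "nat \<Rightarrow> nat \<Rightarrow> 'w::zero"
  assumes n: "0 < n" "0 < n'" and L: "L = lcm n n'" and d: "d = gcd n n'"
    and hB: "\<And>a b. Z a b \<noteq> 0 \<Longrightarrow> a < L \<and> b < L \<and> a div n = b div n \<and> a div n' = b div n'"
    and inv: "cinv L Z d"
    and ij: "i < L" "j < L"
  shows "Z i j = (if i div d = j div d then Z (i mod d) (j mod d) else 0)"
proof (cases "i div d = j div d")
  case True
  have dp: "0 < d" "d dvd L" using d L n by auto
  define q where "q = i div d"
  have qi: "q * d \<le> i" "q * d \<le> j" unfolding q_def using True by (metis div_times_less_eq_dividend)+
  have "Z ((i + (L div d - q) * d) mod L) ((j + (L div d - q) * d) mod L) = Z i j"
    using cinv_mult[OF inv, of "L div d - q"] ij unfolding cinv_def by blast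
  moreover have "(i + (L div d - q) * d) mod L = i mod d"
    using shiftmod[OF qi(1) ij(1) dp(2) dp(1)] unfolding q_def by (simp add: minus_div_mult_eq_mod)
  moreover have "(j + (L div d - q) * d) mod L = j mod d"
    using shiftmod[OF qi(2) ij(2) dp(2) dp(1)] True unfolding q_def by (simp add: minus_div_mult_eq_mod)
  ultimately show ?thesis using True by simp
next
  case False
  show ?thesis
  proof (cases "i div d < j div d")
    case True
    then show ?thesis using lt_case[OF n L d hB inv ij] False by simp
  next
    case F2: False
    have hB': "\<And>a b. (\<lambda>a b. Z b a) a b \<noteq> 0 \<Longrightarrow> a < L \<and> b < L \<and> a div n = b div n \<and> a div n' = b div n'"
      using hB by fastforce
    have inv': "cinv L (\<lambda>a b. Z b a) d" using inv unfolding cinv_def by blast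
    have "j div d < i div d" using False F2 by simp
    then show ?thesis using lt_case[OF n L d hB' inv', of j i] ij False by simp
  qed
qed

lemma X_from_Z:
  fixes Z :: "nat \<Rightarrow> nat \<Rightarrow> 'w::zero"
  assumes st: "\<And>i j. i < L \<Longrightarrow> j < L \<Longrightarrow> Z i j = (if i div d = j div d then Z (i mod d) (j mod d) else 0)"
    and X: "X \<in> mats n" and Z: "Z = bdiag M n X" and M: "0 < M" and L: "L = M * n"
    and d: "0 < d" "d dvd n"
  shows "X = bdiag (n div d) d (\<lambda>a b. if a < d \<and> b < d then Z a b else 0)"
proof (rule ext, rule ext)
  fix i j
  have nd: "n div d * d = n" using d by simp
  have ZX: "Z a b = X a b" if "a < n" "b < n" for a b
  proof -
    have "n \<le> M * n" using M by simp
    hence "a < M * n" "b < M * n" using that by linarith+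
    thus ?thesis unfolding Z bdiag_def using that by simp
  qed
  show "X i j = bdiag (n div d) d (\<lambda>a b. if a < d \<and> b < d then Z a b else 0) i j"
  proof (cases "i < n \<and> j < n")
    case True
    have "n \<le> M * n" using M by simp
    hence "i < L" "j < L" using True L by linarith+
    hence "Z i j = (if i div d = j div d then Z (i mod d) (j mod d) else 0)"
      using st by blast
    moreover have "Z i j = X i j" using ZX True by blast
    ultimately have "X i j = (if i div d = j div d then Z (i mod d) (j mod d) else 0)"
      by simp
    moreover have "i mod d < d" "j mod d < d" using d by simp_all
    ultimately show ?thesis unfolding bdiag_def nd using True by simp
  next
    case False
    then show ?thesis using X unfolding bdiag_def nd mats_def by auto
  qed
qed

lemma bdiag_comp:
  assumes "0 < d" "0 < m"
  shows "bdiag M (m * d) (bdiag m d Y) = bdiag (M * m) d Y"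
proof (rule ext, rule ext)
  fix i j :: nat
  have a: "(x mod (m * d)) div d = x div d mod m" for x
    using mod_mult2_eq[of x d m] assms by (simp add: mult.commute)
  have b: "(x mod (m * d)) mod d = x mod d" for x
    by (simp add: mod_mod_cancel)
  have c: "x div (m * d) = x div d div m" for x
    by (simp add: div_mult2_eq mult.commute)
  have e: "(p = q) = (p div m = q div m \<and> p mod m = q mod m)" for p q :: nat
  proof
    assume h: "p div m = q div m \<and> p mod m = q mod m"
    have "p = p div m * m + p mod m" by simp
    also have "\<dots> = q div m * m + q mod m" using h by simp
    also have "\<dots> = q" by simp
    finally show "p = q" .
  qed simp
  have f: "x mod (m * d) < m * d" for x using assms by simp
  have g: "M * (m * d) = M * m * d" by (simp add: mult.assoc)
  have cond: "(i div (m * d) = j div (m * d) \<and> (i mod (m * d)) div d = (j mod (m * d)) div d)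
      = (i div d = j div d)"
    unfolding a c using e[of "i div d" "j div d"] by simp
  show "bdiag M (m * d) (bdiag m d Y) i j = bdiag (M * m) d Y i j"
  proof (cases "i < M * m * d \<and> j < M * m * d \<and> i div d = j div d")
    case True
    then show ?thesis unfolding bdiag_def g using cond f b by simp
  next
    case False
    then show ?thesis unfolding bdiag_def g using cond f by auto
  qed
qed

theorem proposition7p14:
  fixes sc :: "complex \<Rightarrow> 'w::banach \<Rightarrow> 'w"
    and N :: "nat \<Rightarrow> (nat \<Rightarrow> nat \<Rightarrow> 'w) \<Rightarrow> real"
    and X X' :: "nat \<Rightarrow> nat \<Rightarrow> 'w" and n n' M M' :: nat
  assumes "operator_space sc N"
    and "0 < n" and "0 < n'"
    and "X \<in> mats n" and "X' \<in> mats n'"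
    and "M * n = M' * n'" and "M * n = lcm n n'"
  shows "N (M * n) (\<lambda>i j. bdiag M n X i j - bdiag M' n' X' i j) = 0 \<longleftrightarrow>
    (\<exists>d Y m m'. Y \<in> mats d \<and> n = m * d \<and> n' = m' * d \<and>
        X = bdiag m d Y \<and> X' = bdiag m' d Y)"
proof -
  have os: "\<forall>n. \<forall>X \<in> mats n. N n X \<ge> 0 \<and> (N n X = 0 \<longleftrightarrow> X = (\<lambda>i j. 0))"
    using assms(1) unfolding operator_space_def by (elim conjE) assumption
  have nz: "\<And>k Y. Y \<in> mats k \<Longrightarrow> (N k Y = 0 \<longleftrightarrow> Y = (\<lambda>i j. 0))"
    using os by blast
  define L where "L = M * n"
  have L1: "L = lcm n n'" "L = M' * n'" using assms L_def by simp_all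
  have Lpos: "0 < L" unfolding L1(1) using assms(2,3) by (simp add: lcm_pos_nat)
  have Mp1: "0 < M" using Lpos L_def by simp
  have Mp2: "0 < M'" using Lpos L1(2) by simp
  note Mp = Mp1 Mp2
  have Dm: "(\<lambda>i j. bdiag M n X i j - bdiag M' n' X' i j) \<in> mats L"
    unfolding mats_def bdiag_def using L_def L1 by auto
  have step1: "N L (\<lambda>i j. bdiag M n X i j - bdiag M' n' X' i j) = 0 \<longleftrightarrow> bdiag M n X = bdiag M' n' X'"
    using nz[OF Dm] by (simp add: fun_eq_iff)
  show ?thesis
    unfolding L_def[symmetric] step1
  proof
    assume eq: "bdiag M n X = bdiag M' n' X'"
    define Z where "Z = bdiag M n X"
    define d where "d = gcd n n'"
    have dp: "0 < d" "d dvd n" "d dvd n'" using d_def assms by auto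
    have hB: "a < L \<and> b < L \<and> a div n = b div n \<and> a div n' = b div n'" if "Z a b \<noteq> 0" for a b
    proof -
      have "bdiag M n X a b \<noteq> 0" "bdiag M' n' X' a b \<noteq> 0" using that eq unfolding Z_def by simp_all
      hence "a < M * n \<and> b < M * n \<and> a div n = b div n" "a div n' = b div n'"
        by (auto simp: bdiag_def split: if_split_asm)
      thus ?thesis unfolding L_def by blast
    qed
    have i1: "cinv L Z n" unfolding Z_def L_def by (rule bdiag_cinv[OF assms(2)])
    have i2: "cinv L Z n'" unfolding Z_def eq L1(2) by (rule bdiag_cinv[OF assms(3)])
    obtain x y where xy: "n * x = n' * y + d" using bezout_nat[of n n'] assms d_def by auto
    have "cinv L Z (x * n + (y * (M' - 1)) * n')" by (intro cinv_add cinv_mult i1 i2)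
    moreover have "x * n + (y * (M' - 1)) * n' = d + y * L"
    proof -
      have h0: "(M' - 1) * n' + n' = M' * n'" using Mp(2) by (cases M') simp_all
      have h1: "(M' - 1) * n' + n' = L" using h0 L1(2) by simp
      have h2: "y * ((M' - 1) * n') + y * n' = y * L" using h1 by (metis distrib_left)
      have h3: "x * n = y * n' + d" using xy by (simp add: mult.commute)
      have h4: "y * (M' - 1) * n' = y * ((M' - 1) * n')" by (simp add: mult.assoc)
      show ?thesis using h2 h3 h4 by linarith
    qed
    ultimately have "cinv L Z (d + y * L)" by simp
    hence i3: "cinv L Z d" by (rule cinv_modL)
    have st: "\<And>i j. i < L \<Longrightarrow> j < L \<Longrightarrow> Z i j = (if i div d = j div d then Z (i mod d) (j mod d) else 0)"
      using struct_aux[OF assms(2,3) L1(1) d_def hB i3] by blast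
    define Y where "Y = (\<lambda>a b. if a < d \<and> b < d then Z a b else 0)"
    have ZZ: "Z = bdiag M' n' X'" unfolding Z_def by (rule eq)
    have X1: "X = bdiag (n div d) d Y"
      unfolding Y_def by (rule X_from_Z[OF st assms(4) Z_def Mp(1) L_def dp(1,2)])
    have X2: "X' = bdiag (n' div d) d Y"
      unfolding Y_def by (rule X_from_Z[OF st assms(5) ZZ Mp(2) L1(2) dp(1,3)])
    have Ym: "Y \<in> mats d" unfolding Y_def mats_def by auto
    show "\<exists>d Y m m'. Y \<in> mats d \<and> n = m * d \<and> n' = m' * d \<and> X = bdiag m d Y \<and> X' = bdiag m' d Y"
    proof (intro exI conjI)
      show "Y \<in> mats d" by (rule Ym)
      show "n = n div d * d" using dp by simp
      show "n' = n' div d * d" using dp by simp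
      show "X = bdiag (n div d) d Y" by (rule X1)
      show "X' = bdiag (n' div d) d Y" by (rule X2)
    qed
  next
    assume "\<exists>d Y m m'. Y \<in> mats d \<and> n = m * d \<and> n' = m' * d \<and> X = bdiag m d Y \<and> X' = bdiag m' d Y"
    then obtain d Y m m' where h: "n = m * d" "n' = m' * d" "X = bdiag m d Y" "X' = bdiag m' d Y" by blast
    have p: "0 < d" "0 < m" "0 < m'" using h assms by auto
    have "M * m * d = M' * m' * d" using assms(6) h by (simp add: mult.assoc)
    hence e: "M * m = M' * m'" using p by simp
    show "bdiag M n X = bdiag M' n' X'"
      unfolding h by (simp only: bdiag_comp[OF p(1,2)] bdiag_comp[OF p(1,3)] e)
  qed
qed

end
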